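(* Let $d,N\ge 1$ be integers, let $\mathbb{K},\mathbb{M}$ be real skew-symmetric $d\times d$ matrices, let $S:\mathbb{R}^d\to\mathbb{R}$ be smooth, and let $\mathcal{D}_h$ be a real $N\times N$ matrix (no skew-symmetry is assumed). Put $\mathcal{C}_h=\mathcal{D}_h\otimes \mathbb{I}_d$. Let $z_h(t)=(z_{h,0}(t),\dots,z_{h,N-1}(t))\in\mathbb{R}^{dN}$, $z_{h,j}(t)\in\mathbb{R}^d$, be a differentiable solution of the semi-discrete system $$\mathbb{K}\,\frac{d z_{h,j}}{dt}(t)+\mathbb{M}\,\big(\mathcal{C}_h z_h(t)\big)_j=\nabla S\big(z_{h,j}(t)\big),\qquad j=0,\dots,N-1.$$ For $j=0,\dots,N-1$ define $$\mathfrak{E}_j=S(z_{h,j})-\tfrac12\, z_{h,j}^{\top}\mathbb{M}\,(\mathcal{C}_h z_h)_j,\qquad \mathfrak{F}_j=\tfrac12\, z_{h,j}^{\top}\mathbb{M}\,\frac{dz_{h,j}}{dt},$$ $$\mathfrak{I}_j=\tfrac12\, z_{h,j}^{\top}\mathbb{K}\,(\mathcal{C}_h z_h)_j,\qquad \mathfrak{M}_j=S(z_{h,j})-\tfrac12\, z_{h,j}^{\top}\mathbb{K}\,\frac{dz_{h,j}}{dt}.$$ Then, for every $j$, $$\frac{d\mathfrak{E}_j}{dt}+\nabla_h\mathfrak{F}_j=0,\qquad \frac{d\mathfrak{I}_j}{dt}+\nabla_h\mathfrak{M}_j=0,$$ where $\nabla_h$ is the discrete spatial derivative described in the context.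
   Context: For $z=(z_0,\dots,z_{N-1})\in\mathbb{R}^{dN}$ with $z_j\in\mathbb{R}^d$, $(\mathcal{C}_h z)_j=\sum_{k=0}^{N-1}(\mathcal{D}_h)_{jk}z_k$ ($\mathcal{D}_h$ is a grid operator approximating $\partial_x$ under periodic boundary conditions). The discrete gradient $\nabla_h$ is defined, for a smooth function $Q$ of the state at node $j$, by $\nabla_h Q(z_j)=\nabla Q(z_j)^{\top}(\mathcal{C}_h z)_j$, i.e. the chain rule with the derivative $\partial_x$ of the state replaced by $\mathcal{C}_h z$; for quantities that also involve the time derivative $\dot z=dz_h/dt$, every occurrence of the state (including in $\dot z$) is differentiated this way, so that explicitly $\nabla_h\mathfrak{F}_j=\tfrac12(\mathcal{C}_h z_h)_j^{\top}\mathbb{M}\,\dot z_{h,j}+\tfrac12 z_{h,j}^{\top}\mathbb{M}\,(\mathcal{C}_h\dot z_h)_j$ and $\nabla_h\mathfrak{M}_j=\nabla S(z_{h,j})^{\top}(\mathcal{C}_h z_h)_j-\tfrac12(\mathcal{C}_h z_h)_j^{\top}\mathbb{K}\,\dot z_{h,j}-\tfrac12 z_{h,j}^{\top}\mathbb{K}\,(\mathcal{C}_h \dot z_h)_j$. *)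

theory Defs
  imports "HOL-Analysis.Analysis"
begin

text \<open>States: z = (z_0,...,z_{N-1}) with z_j in R^d is modelled as an element of
  (real^'d)^'n, where the finite types 'd and 'n have cardinalities d and N.\<close>

text \<open>C_h = D_h (Kronecker) I_d acting blockwise: (C_h z)_j = sum_k (D_h)_{jk} z_k.\<close>
definition Ch :: "real^'n^'n \<Rightarrow> (real^'d)^'n \<Rightarrow> (real^'d)^'n" where
  "Ch D z = (\<chi> j. \<Sum>k\<in>UNIV. (D$j$k) *\<^sub>R (z$k))"

definition skew_symmetric :: "real^'d^'d \<Rightarrow> bool" where
  "skew_symmetric A \<longleftrightarrow> transpose A = - A"

text \<open>Local densities; zd stands for the time derivative dz_h/dt.\<close>
definition frakE :: "(real^'d \<Rightarrow> real) \<Rightarrow> real^'d^'d \<Rightarrow> real^'n^'n \<Rightarrow> (real^'d)^'n \<Rightarrow> 'n \<Rightarrow> real" where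
  "frakE S M D z j = S (z$j) - 1/2 * ((z$j) \<bullet> (M *v (Ch D z $ j)))"

definition frakF :: "real^'d^'d \<Rightarrow> (real^'d)^'n \<Rightarrow> (real^'d)^'n \<Rightarrow> 'n \<Rightarrow> real" where
  "frakF M z zd j = 1/2 * ((z$j) \<bullet> (M *v (zd$j)))"

definition frakI :: "real^'d^'d \<Rightarrow> real^'n^'n \<Rightarrow> (real^'d)^'n \<Rightarrow> 'n \<Rightarrow> real" where
  "frakI K D z j = 1/2 * ((z$j) \<bullet> (K *v (Ch D z $ j)))"

definition frakM :: "(real^'d \<Rightarrow> real) \<Rightarrow> real^'d^'d \<Rightarrow> (real^'d)^'n \<Rightarrow> (real^'d)^'n \<Rightarrow> 'n \<Rightarrow> real" where
  "frakM S K z zd j = S (z$j) - 1/2 * ((z$j) \<bullet> (K *v (zd$j)))"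

definition gradh_F :: "real^'d^'d \<Rightarrow> real^'n^'n \<Rightarrow> (real^'d)^'n \<Rightarrow> (real^'d)^'n \<Rightarrow> 'n \<Rightarrow> real" where
  "gradh_F M D z zd j = 1/2 * ((Ch D z $ j) \<bullet> (M *v (zd$j))) + 1/2 * ((z$j) \<bullet> (M *v (Ch D zd $ j)))"

definition gradh_M :: "(real^'d \<Rightarrow> real^'d) \<Rightarrow> real^'d^'d \<Rightarrow> real^'n^'n \<Rightarrow> (real^'d)^'n \<Rightarrow> (real^'d)^'n \<Rightarrow> 'n \<Rightarrow> real" where
  "gradh_M gradS K D z zd j = (gradS (z$j)) \<bullet> (Ch D z $ j)
     - 1/2 * ((Ch D z $ j) \<bullet> (K *v (zd$j))) - 1/2 * ((z$j) \<bullet> (K *v (Ch D zd $ j)))"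

end

theory Submission
  imports Defs
begin

lemma skew_inner:
  fixes A :: "real^'d^'d"
  assumes "skew_symmetric A"
  shows "x \<bullet> (A *v y) = - (y \<bullet> (A *v x))"
proof -
  have "x \<bullet> (A *v y) = (x v* A) \<bullet> y" by (simp add: dot_lmul_matrix)
  also have "x v* A = transpose A *v x" by (simp add: transpose_matrix_vector)
  also have "transpose A = - A" using assms by (simp add: skew_symmetric_def)
  finally show ?thesis
    by (simp add: inner_commute matrix_vector_mult_def inner_vec_def sum_negf)
qed

lemma skew_inner0:
  fixes A :: "real^'d^'d"
  assumes "skew_symmetric A"
  shows "x \<bullet> (A *v x) = 0"
  using skew_inner[OF assms, of x x] by simp

lemma Ch_deriv:
  assumes "(z has_vector_derivative zd) F"
  shows "((\<lambda>s. Ch D (z s) $ j) has_vector_derivative (Ch D zd $ j)) F"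
  unfolding Ch_def vec_lambda_beta
  by (intro has_vector_derivative_sum bounded_linear.has_vector_derivative[OF bounded_linear_scaleR_right]
        bounded_linear.has_vector_derivative[OF bounded_linear_vec_nth] assms)

theorem theorem1:
  fixes K M :: "real^'d^'d"
    and D :: "real^'n^'n"
    and S :: "real^'d \<Rightarrow> real"
    and gradS :: "real^'d \<Rightarrow> real^'d"
    and z zdot :: "real \<Rightarrow> (real^'d)^'n"
    and T :: "real set"
  assumes skK: "skew_symmetric K"
    and skM: "skew_symmetric M"
    and S_grad: "\<And>x. (S has_derivative (\<lambda>v. gradS x \<bullet> v)) (at x)"
    and T_int: "is_interval T"
    and z_deriv: "\<And>t. t \<in> T \<Longrightarrow> (z has_vector_derivative zdot t) (at t within T)"
    and ode: "\<And>t j. t \<in> T \<Longrightarrow>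
               K *v (zdot t $ j) + M *v (Ch D (z t) $ j) = gradS (z t $ j)"
  shows "\<forall>t\<in>T. \<forall>j.
           (\<exists>e. ((\<lambda>s. frakE S M D (z s) j) has_real_derivative e) (at t within T)
                \<and> e + gradh_F M D (z t) (zdot t) j = 0)
         \<and> (\<exists>i. ((\<lambda>s. frakI K D (z s) j) has_real_derivative i) (at t within T)
                \<and> i + gradh_M gradS K D (z t) (zdot t) j = 0)"
proof (intro ballI allI conjI)
  fix t j assume t: "t \<in> T"
  define a where "a = z t $ j"
  define a' where "a' = zdot t $ j"
  define c where "c = Ch D (z t) $ j"
  define c' where "c' = Ch D (zdot t) $ j"
  have zj: "((\<lambda>s. z s $ j) has_vector_derivative a') (at t within T)"
    unfolding a'_def
    by (rule bounded_linear.has_vector_derivative[OF bounded_linear_vec_nth z_deriv[OF t]])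
  have cj: "((\<lambda>s. Ch D (z s) $ j) has_vector_derivative c') (at t within T)"
    unfolding c'_def by (rule Ch_deriv[OF z_deriv[OF t]])
  have Mc: "((\<lambda>s. M *v (Ch D (z s) $ j)) has_vector_derivative M *v c') (at t within T)"
    by (rule bounded_linear.has_vector_derivative[OF matrix_vector_mul_bounded_linear cj])
  have Kc: "((\<lambda>s. K *v (Ch D (z s) $ j)) has_vector_derivative K *v c') (at t within T)"
    by (rule bounded_linear.has_vector_derivative[OF matrix_vector_mul_bounded_linear cj])
  have Sz: "((\<lambda>s. S (z s $ j)) has_vector_derivative gradS a \<bullet> a') (at t within T)"
  proof -
    have "((\<lambda>s. S (z s $ j)) has_derivative (\<lambda>h. gradS a \<bullet> (h *\<^sub>R a'))) (at t within T)"
      using has_derivative_compose[OF zj[unfolded has_vector_derivative_def] S_grad[of "z t $ j"]]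
      unfolding a_def by simp
    then show ?thesis by (simp add: has_vector_derivative_def inner_scaleR_right mult.commute)
  qed
  have iM: "((\<lambda>s. (z s $ j) \<bullet> (M *v (Ch D (z s) $ j))) has_vector_derivative
      a \<bullet> (M *v c') + a' \<bullet> (M *v c)) (at t within T)"
    using bounded_bilinear.has_vector_derivative[OF bounded_bilinear_inner zj Mc]
    by (simp add: a_def c_def)
  have iK: "((\<lambda>s. (z s $ j) \<bullet> (K *v (Ch D (z s) $ j))) has_vector_derivative
      a \<bullet> (K *v c') + a' \<bullet> (K *v c)) (at t within T)"
    using bounded_bilinear.has_vector_derivative[OF bounded_bilinear_inner zj Kc]
    by (simp add: a_def c_def)
  have od: "K *v a' + M *v c = gradS a" using ode[OF t] by (simp add: a_def a'_def c_def)
  show "\<exists>e. ((\<lambda>s. frakE S M D (z s) j) has_real_derivative e) (at t within T)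
                \<and> e + gradh_F M D (z t) (zdot t) j = 0"
  proof (intro exI conjI)
    show "((\<lambda>s. frakE S M D (z s) j) has_real_derivative
       gradS a \<bullet> a' - 1/2 * (a \<bullet> (M *v c') + a' \<bullet> (M *v c))) (at t within T)"
      unfolding frakE_def has_real_derivative_iff_has_vector_derivative
      by (intro has_vector_derivative_diff Sz has_vector_derivative_mult_right iM)
    have e1: "gradS a \<bullet> a' = a' \<bullet> (M *v c)"
      using od skew_inner0[OF skK, of a']
      by (metis inner_commute inner_add_right add.left_neutral)
    have e2: "c \<bullet> (M *v a') = - (a' \<bullet> (M *v c))" by (rule skew_inner[OF skM])
    show "gradS a \<bullet> a' - 1/2 * (a \<bullet> (M *v c') + a' \<bullet> (M *v c)) + gradh_F M D (z t) (zdot t) j = 0"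
      unfolding gradh_F_def using e1 e2 by (simp add: a_def a'_def c_def c'_def algebra_simps)
  qed
  show "\<exists>i. ((\<lambda>s. frakI K D (z s) j) has_real_derivative i) (at t within T)
                \<and> i + gradh_M gradS K D (z t) (zdot t) j = 0"
  proof (intro exI conjI)
    show "((\<lambda>s. frakI K D (z s) j) has_real_derivative
       1/2 * (a \<bullet> (K *v c') + a' \<bullet> (K *v c))) (at t within T)"
      unfolding frakI_def has_real_derivative_iff_has_vector_derivative
      by (intro has_vector_derivative_mult_right iK)
    have e1: "gradS a \<bullet> c = (K *v a') \<bullet> c"
      using od skew_inner0[OF skM, of c]
      by (metis inner_commute inner_add_left add.right_neutral)
    have e2: "c \<bullet> (K *v a') = - (a' \<bullet> (K *v c))" by (rule skew_inner[OF skK])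
    show "1/2 * (a \<bullet> (K *v c') + a' \<bullet> (K *v c)) + gradh_M gradS K D (z t) (zdot t) j = 0"
      unfolding gradh_M_def using e1 e2 by (simp add: a_def a'_def c_def c'_def algebra_simps inner_commute)
  qed
qed

end
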